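(* Let $X$ be a real Banach space and $\varepsilon>0$. Let $C\subseteq X$ be closed, bounded, convex and non-$\varepsilon$-dentable, let $C'\subseteq C$ be closed and convex, and let $D\subseteq C$ satisfy $\alpha(D)<\varepsilon$. If $C=\overline{\operatorname{co}}(C'\cup D)$, then $C=C'$.
   Context: $\overline{\operatorname{co}}(E)$ denotes the norm-closed convex hull of $E$. For $A\subseteq X$, the Kuratowski measure of noncompactness $\alpha(A)$ is the infimum of all $\varepsilon>0$ such that $A$ can be covered by finitely many sets of diameter at most $\varepsilon$. For a bounded nonempty $A\subseteq X$, $f$ in the closed unit ball of $X^*$ and $\delta>0$, the slice $S(f,A,\delta)=\{a\in A: f(a)>\sup f(A)-\delta\}$; a slice of $A$ is any set of this form. A bounded set $A$ is non-$\varepsilon$-dentable if every slice of $A$ has diameter $>\varepsilon$. *)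

theory Defs
  imports "HOL-Analysis.Analysis"
begin

definition closed_convex_hull :: "'a::real_normed_vector set \<Rightarrow> 'a set" where
  "closed_convex_hull E = closure (convex hull E)"

definition dual_unit_ball :: "('a::real_normed_vector \<Rightarrow> real) set" where
  "dual_unit_ball = {f. bounded_linear f \<and> onorm f \<le> 1}"

definition slice :: "('a::real_normed_vector \<Rightarrow> real) \<Rightarrow> 'a set \<Rightarrow> real \<Rightarrow> 'a set" where
  "slice f A \<delta> = {a \<in> A. f a > Sup (f ` A) - \<delta>}"

definition non_eps_dentable :: "real \<Rightarrow> 'a::real_normed_vector set \<Rightarrow> bool" where
  "non_eps_dentable \<epsilon> A \<longleftrightarrow> bounded A \<and> A \<noteq> {} \<and>
     (\<forall>f \<in> dual_unit_ball. \<forall>\<delta>>0. diameter (slice f A \<delta>) > \<epsilon>)"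

text \<open>Kuratowski measure of noncompactness (value \<infinity> if no finite cover by
  bounded sets exists). Sets of diameter at most e are in particular bounded.\<close>
definition kuratowski_mnc :: "'a::real_normed_vector set \<Rightarrow> ereal" where
  "kuratowski_mnc A = Inf {ereal e | e. e > 0 \<and>
     (\<exists>F. finite F \<and> A \<subseteq> \<Union>F \<and> (\<forall>S\<in>F. bounded S \<and> diameter S \<le> e))}"

end

theory Submission
  imports Defs
begin


definition sublin :: "('a::real_vector \<Rightarrow> real) \<Rightarrow> bool" where
  "sublin q \<longleftrightarrow> (\<forall>x y. q (x + y) \<le> q x + q y) \<and> (\<forall>t x. t > 0 \<longrightarrow> q (t *\<^sub>R x) \<le> t * q x)"

lemma sublin_add: "sublin q \<Longrightarrow> q (x + y) \<le> q x + q y"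
  by (simp add: sublin_def)

lemma sublin_hom:
  assumes "sublin q" "t > 0" shows "q (t *\<^sub>R x) = t * q x"
proof -
  have 1: "q (t *\<^sub>R x) \<le> t * q x" using assms by (simp add: sublin_def)
  have "q ((1/t) *\<^sub>R (t *\<^sub>R x)) \<le> (1/t) * q (t *\<^sub>R x)" using assms unfolding sublin_def by (meson divide_pos_pos zero_less_one)
  then have "q x \<le> (1/t) * q (t *\<^sub>R x)" using assms by simp
  then have "t * q x \<le> q (t *\<^sub>R x)" using assms by (simp add: field_simps)
  with 1 show ?thesis by simp
qed

lemma sublin_zero: assumes "sublin q" shows "q 0 = 0"
proof -
  have "q ((2::real) *\<^sub>R 0) = 2 * q 0" by (rule sublin_hom[OF assms]) simp
  then show ?thesis by simp
qed

lemma sublin_hom0: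
  assumes "sublin q" "t \<ge> 0" shows "q (t *\<^sub>R x) = t * q x"
  using assms sublin_hom[OF assms(1)] sublin_zero[OF assms(1)]
  by (cases "t = 0") auto

lemma sublin_neg: assumes "sublin q" shows "- q (- x) \<le> q x"
proof -
  have "q (x + - x) \<le> q x + q (- x)" by (rule sublin_add[OF assms])
  then show ?thesis using sublin_zero[OF assms] by simp
qed

lemma HB:
  fixes p :: "'a::real_vector \<Rightarrow> real"
  assumes p: "sublin p"
  shows "\<exists>f. (\<forall>x y. f (x + y) = f x + f y) \<and> (\<forall>c x. f (c *\<^sub>R x) = c * f x) \<and> (\<forall>x. f x \<le> p x)"
proof -
  define AA where "AA = {q. sublin q \<and> (\<forall>x. q x \<le> p x)}"
  define P where "P = (\<lambda>(a::'a \<Rightarrow> real) b. \<forall>x. b x \<le> a x)"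
  have po: "partial_order_on AA (relation_of P AA)"
  proof (rule partial_order_on_relation_ofI)
    show "P a a" for a by (simp add: P_def)
    show "P a c" if "P a b" "P b c" for a b c using that unfolding P_def by (meson order_trans)
    show "a = b" if "P a b" "P b a" for a b using that unfolding P_def by (intro ext) (meson order_antisym)
  qed
  have ch: "\<exists>u\<in>AA. \<forall>a\<in>CC. P a u" if CC: "CC \<in> Chains (relation_of P AA)" for CC
  proof (cases "CC = {}")
    case True then show ?thesis using p by (auto simp: AA_def)
  next
    case False
    have sub: "CC \<subseteq> AA" using CC by (auto simp: Chains_def relation_of_def)
    have tot: "(\<forall>x. b x \<le> a x) \<or> (\<forall>x. a x \<le> b x)" if "a \<in> CC" "b \<in> CC" for a b
      using CC that by (auto simp: Chains_def relation_of_def P_def)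
    define u where "u = (\<lambda>x. Inf ((\<lambda>q. q x) ` CC))"
    have bdd: "bdd_below ((\<lambda>q. q x) ` CC)" for x
    proof (rule bdd_belowI2)
      fix q assume "q \<in> CC"
      then have "sublin q" "\<forall>x. q x \<le> p x" using sub by (auto simp: AA_def)
      then show "- p (- x) \<le> q x" using sublin_neg[of q x] by (smt (verit))
    qed
    have low: "u x \<le> q x" if "q \<in> CC" for q x
      unfolding u_def by (rule cInf_lower) (use that bdd in auto)
    have grt: "c \<le> u x" if "\<And>q. q \<in> CC \<Longrightarrow> c \<le> q x" for c x
      unfolding u_def by (rule cInf_greatest) (use that False in auto)
    have sl: "sublin q" if "q \<in> CC" for q using that sub by (auto simp: AA_def)
    have "sublin u"
      unfolding sublin_def
    proof (intro conjI allI impI)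
      fix x y
      have 1: "u (x + y) \<le> q1 x + q2 y" if "q1 \<in> CC" "q2 \<in> CC" for q1 q2
      proof (cases "\<forall>x. q2 x \<le> q1 x")
        case True
        have "u (x + y) \<le> q2 (x + y)" by (rule low[OF that(2)])
        also have "\<dots> \<le> q2 x + q2 y" by (rule sublin_add[OF sl[OF that(2)]])
        finally show ?thesis using True[rule_format, of x] by linarith
      next
        case False
        then have "\<forall>x. q1 x \<le> q2 x" using tot[OF that] by auto
        have "u (x + y) \<le> q1 (x + y)" by (rule low[OF that(1)])
        also have "\<dots> \<le> q1 x + q1 y" by (rule sublin_add[OF sl[OF that(1)]])
        finally show ?thesis using \<open>\<forall>x. q1 x \<le> q2 x\<close>[rule_format, of y] by linarith
      qed
      have 2: "u (x + y) - q2 y \<le> u x" if "q2 \<in> CC" for q2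
        by (rule grt) (use 1 that in force)
      have "u (x + y) - u x \<le> u y"
        by (rule grt) (use 2 in force)
      then show "u (x + y) \<le> u x + u y" by simp
    next
      fix t x :: 'a
      show "u (t *\<^sub>R x) \<le> t * u x" if "t > 0" for t :: real and x
      proof -
        have "u (t *\<^sub>R x) / t \<le> u x"
        proof (rule grt)
          fix q assume q: "q \<in> CC"
          have "u (t *\<^sub>R x) \<le> q (t *\<^sub>R x)" by (rule low[OF q])
          also have "\<dots> = t * q x" by (rule sublin_hom[OF sl[OF q] that])
          finally show "u (t *\<^sub>R x) / t \<le> q x" using that by (simp add: divide_simps mult.commute)
        qed
        then show ?thesis using that by (simp add: divide_simps mult.commute)
      qed
    qed
    moreover have "u x \<le> p x" for x
    proof -
      obtain q where "q \<in> CC" using False by auto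
      moreover have "q x \<le> p x" using \<open>q \<in> CC\<close> sub by (auto simp: AA_def)
      ultimately show ?thesis using low[of q x] by linarith
    qed
    ultimately have "u \<in> AA" by (simp add: AA_def)
    moreover have "\<forall>a\<in>CC. P a u" using low by (simp add: P_def)
    ultimately show ?thesis by blast
  qed
  obtain m where m: "m \<in> AA" "\<And>a. a \<in> AA \<Longrightarrow> P m a \<Longrightarrow> a = m"
    using predicate_Zorn[OF po ch] by blast
  have ms: "sublin m" and mp: "\<And>x. m x \<le> p x" using m(1) by (auto simp: AA_def)
  have super: "m x + m y \<le> m (x + y)" for x y
  proof -
    define r where "r = (\<lambda>z. Inf ((\<lambda>t. m (z + t *\<^sub>R y) - t * m y) ` {0..}))"
    have bdd: "bdd_below ((\<lambda>t. m (z + t *\<^sub>R y) - t * m y) ` {0..})" for z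
    proof (rule bdd_belowI2)
      fix t :: real assume "t \<in> {0..}"
      then have t: "t \<ge> 0" by simp
      have "m ((z + t *\<^sub>R y) + - z) \<le> m (z + t *\<^sub>R y) + m (- z)" by (rule sublin_add[OF ms])
      then have "m (t *\<^sub>R y) \<le> m (z + t *\<^sub>R y) + m (- z)" by simp
      then show "- m (- z) \<le> m (z + t *\<^sub>R y) - t * m y" using sublin_hom0[OF ms t] by simp
    qed
    have rlow: "r z \<le> m (z + t *\<^sub>R y) - t * m y" if "t \<ge> 0" for z t
      unfolding r_def by (rule cInf_lower) (use that bdd in auto)
    have rgrt: "c \<le> r z" if "\<And>t. t \<ge> 0 \<Longrightarrow> c \<le> m (z + t *\<^sub>R y) - t * m y" for c z
      unfolding r_def by (rule cInf_greatest) (use that in auto)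
    have "sublin r"
      unfolding sublin_def
    proof (intro conjI allI impI)
      fix z1 z2
      have 1: "r (z1 + z2) \<le> (m (z1 + t1 *\<^sub>R y) - t1 * m y) + (m (z2 + t2 *\<^sub>R y) - t2 * m y)"
        if "t1 \<ge> 0" "t2 \<ge> 0" for t1 t2
      proof -
        have "r (z1 + z2) \<le> m (z1 + z2 + (t1 + t2) *\<^sub>R y) - (t1 + t2) * m y"
          by (rule rlow) (use that in simp)
        also have "z1 + z2 + (t1 + t2) *\<^sub>R y = (z1 + t1 *\<^sub>R y) + (z2 + t2 *\<^sub>R y)"
          by (simp add: algebra_simps)
        finally show ?thesis using sublin_add[OF ms, of "z1 + t1 *\<^sub>R y" "z2 + t2 *\<^sub>R y"]
          by (simp add: algebra_simps)
      qed
      have 2: "r (z1 + z2) - (m (z2 + t2 *\<^sub>R y) - t2 * m y) \<le> r z1" if "t2 \<ge> 0" for t2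
        by (rule rgrt) (use 1 that in force)
      have "r (z1 + z2) - r z1 \<le> r z2" by (rule rgrt) (use 2 in force)
      then show "r (z1 + z2) \<le> r z1 + r z2" by simp
    next
      fix s :: real and z :: 'a
      assume s: "s > 0"
      have "r (s *\<^sub>R z) / s \<le> r z"
      proof (rule rgrt)
        fix t :: real assume t: "t \<ge> 0"
        have "r (s *\<^sub>R z) \<le> m (s *\<^sub>R z + (s * t) *\<^sub>R y) - (s * t) * m y"
          by (rule rlow) (use s t in simp)
        also have "s *\<^sub>R z + (s * t) *\<^sub>R y = s *\<^sub>R (z + t *\<^sub>R y)" by (simp add: algebra_simps)
        also have "m (s *\<^sub>R (z + t *\<^sub>R y)) = s * m (z + t *\<^sub>R y)" by (rule sublin_hom[OF ms s])
        finally have "r (s *\<^sub>R z) \<le> s * (m (z + t *\<^sub>R y) - t * m y)" by (simp add: algebra_simps)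
        then show "r (s *\<^sub>R z) / s \<le> m (z + t *\<^sub>R y) - t * m y" using s by (simp add: divide_simps mult.commute)
      qed
      then show "r (s *\<^sub>R z) \<le> s * r z" using s by (simp add: divide_simps mult.commute)
    qed
    moreover have rm: "r z \<le> m z" for z using rlow[of 0 z] by simp
    moreover have "r z \<le> p z" for z using rm[of z] mp[of z] by linarith
    ultimately have "r \<in> AA" by (simp add: AA_def)
    moreover have "P m r" using rm by (simp add: P_def)
    ultimately have "r = m" using m(2) by blast
    then have "m x \<le> m (x + 1 *\<^sub>R y) - 1 * m y" using rlow[of 1 x] by simp
    then show ?thesis by simp
  qed
  have add: "m (x + y) = m x + m y" for x y
    using super[of x y] sublin_add[OF ms, of x y] by simp
  have neg: "m (- x) = - m x" for x
    using add[of x "- x"] sublin_zero[OF ms] by simp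
  have sc: "m (c *\<^sub>R x) = c * m x" for c x
  proof (cases "c \<ge> 0")
    case True then show ?thesis by (rule sublin_hom0[OF ms])
  next
    case False
    have "m (c *\<^sub>R x) = m (- ((- c) *\<^sub>R x))" by simp
    also have "\<dots> = - ((- c) * m x)" using neg sublin_hom0[OF ms, of "- c" x] False by simp
    finally show ?thesis by simp
  qed
  show ?thesis using add sc mp by blast
qed



lemma separation:
  fixes A :: "'a::real_normed_vector set"
  assumes cl: "closed A" and cv: "convex A" and ne: "A \<noteq> {}" and xA: "x \<notin> A"
  shows "\<exists>f d. bounded_linear f \<and> (\<forall>v. \<bar>f v\<bar> \<le> norm v) \<and> d > 0 \<and> (\<forall>a\<in>A. f a \<le> f x - d)"
proof -
  define d where "d = infdist x A"
  have dpos: "d > 0" unfolding d_def by (rule infdist_pos_not_in_closed[OF cl ne xA])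
  have dle: "d \<le> norm (x - a)" if "a \<in> A" for a
    using infdist_le[OF that, of x] by (simp add: d_def dist_norm)
  obtain a0 where a0: "a0 \<in> A" using ne by blast
  define E where "E = (\<lambda>v. {norm (v + l *\<^sub>R (x - a)) - l * d | l a. l \<ge> 0 \<and> a \<in> A})"
  define p where "p = (\<lambda>v. Inf (E v))"
  have Elow: "- norm v \<le> e" if ev: "e \<in> E v" for v e
  proof -
    obtain l a where la: "l \<ge> 0" "a \<in> A" "e = norm (v + l *\<^sub>R (x - a)) - l * d"
      using ev by (auto simp: E_def)
    have "norm (l *\<^sub>R (x - a)) \<le> norm (v + l *\<^sub>R (x - a)) + norm v"
      using norm_triangle_ineq4[of "v + l *\<^sub>R (x - a)" v] by simp
    moreover have "l * d \<le> norm (l *\<^sub>R (x - a))"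
      using la dle[OF la(2)] by (simp add: mult_left_mono)
    ultimately show ?thesis using la by linarith
  qed
  have Ein: "norm (v + l *\<^sub>R (x - a)) - l * d \<in> E v" if "l \<ge> 0" "a \<in> A" for v l a
    using that by (auto simp: E_def)
  have plow: "p v \<le> e" if "e \<in> E v" for v e
    unfolding p_def by (rule cInf_lower) (use that Elow in \<open>auto intro!: bdd_belowI[where m="- norm v"]\<close>)
  have pgrt: "c \<le> p v" if "\<And>e. e \<in> E v \<Longrightarrow> c \<le> e" for c v
    unfolding p_def by (rule cInf_greatest) (use that Ein[OF order_refl a0] in auto)
  have pnorm: "p v \<le> norm v" for v using plow[OF Ein[OF order_refl a0, of v]] by simp
  have "sublin p"
    unfolding sublin_def
  proof (intro conjI allI impI)
    fix v w
    have 1: "p (v + w) \<le> e1 + e2" if ee: "e1 \<in> E v" "e2 \<in> E w" for e1 e2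
    proof -
      obtain l1 a1 where la1: "l1 \<ge> 0" "a1 \<in> A" "e1 = norm (v + l1 *\<^sub>R (x - a1)) - l1 * d"
        using ee(1) by (auto simp: E_def)
      obtain l2 a2 where la2: "l2 \<ge> 0" "a2 \<in> A" "e2 = norm (w + l2 *\<^sub>R (x - a2)) - l2 * d"
        using ee(2) by (auto simp: E_def)
      show ?thesis
      proof (cases "l1 + l2 = 0")
        case True
        then have "l1 = 0" "l2 = 0" using la1 la2 by auto
        then show ?thesis using pnorm[of "v + w"] norm_triangle_ineq[of v w] la1 la2 by simp
      next
        case False
        define L where "L = l1 + l2"
        have L: "L > 0" using False la1 la2 by (simp add: L_def)
        define a where "a = (l1 / L) *\<^sub>R a1 + (l2 / L) *\<^sub>R a2"
        have aA: "a \<in> A" unfolding a_def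
          by (rule convexD[OF cv la1(2) la2(2)]) (use L la1 la2 in \<open>auto simp: L_def divide_simps\<close>)
        have La: "L *\<^sub>R a = l1 *\<^sub>R a1 + l2 *\<^sub>R a2"
          using L by (simp add: a_def scaleR_add_right)
        have eq: "v + w + L *\<^sub>R (x - a) = (v + l1 *\<^sub>R (x - a1)) + (w + l2 *\<^sub>R (x - a2))"
          using La by (simp add: L_def algebra_simps)
        have "p (v + w) \<le> norm (v + w + L *\<^sub>R (x - a)) - L * d"
          by (rule plow[OF Ein]) (use L aA in auto)
        also have "\<dots> \<le> e1 + e2"
          unfolding eq using norm_triangle_ineq[of "v + l1 *\<^sub>R (x - a1)" "w + l2 *\<^sub>R (x - a2)"] la1 la2
          by (simp add: L_def algebra_simps)
        finally show ?thesis .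
      qed
    qed
    have 2: "p (v + w) - e2 \<le> p v" if "e2 \<in> E w" for e2
      by (rule pgrt) (use 1 that in force)
    have "p (v + w) - p v \<le> p w" by (rule pgrt) (use 2 in force)
    then show "p (v + w) \<le> p v + p w" by simp
  next
    fix t :: real and v :: 'a
    assume t: "t > 0"
    have "p (t *\<^sub>R v) / t \<le> p v"
    proof (rule pgrt)
      fix e assume "e \<in> E v"
      then obtain l a where la: "l \<ge> 0" "a \<in> A" "e = norm (v + l *\<^sub>R (x - a)) - l * d"
        by (auto simp: E_def)
      have "p (t *\<^sub>R v) \<le> norm (t *\<^sub>R v + (t * l) *\<^sub>R (x - a)) - (t * l) * d"
        by (rule plow[OF Ein]) (use t la in auto)
      also have "t *\<^sub>R v + (t * l) *\<^sub>R (x - a) = t *\<^sub>R (v + l *\<^sub>R (x - a))" by (simp add: algebra_simps)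
      also have "norm (t *\<^sub>R (v + l *\<^sub>R (x - a))) = t * norm (v + l *\<^sub>R (x - a))" using t by simp
      finally have "p (t *\<^sub>R v) \<le> t * norm (v + l *\<^sub>R (x - a)) - (t * l) * d" .
      moreover have "t * e = t * norm (v + l *\<^sub>R (x - a)) - (t * l) * d" unfolding la(3) by (simp add: right_diff_distrib)
      ultimately have "p (t *\<^sub>R v) \<le> t * e" by linarith
      then show "p (t *\<^sub>R v) / t \<le> e" using t by (simp add: divide_simps mult.commute)
    qed
    then show "p (t *\<^sub>R v) \<le> t * p v" using t by (simp add: divide_simps mult.commute)
  qed
  then obtain f where fadd: "\<And>x y. f (x + y) = f x + f y" and fsc: "\<And>c x. f (c *\<^sub>R x) = c * f x"
    and fp: "\<And>x. f x \<le> p x"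
    using HB by blast
  have fb: "\<bar>f v\<bar> \<le> norm v" for v
  proof -
    have "f v \<le> norm v" using fp[of v] pnorm[of v] by linarith
    moreover have "f (- v) = - f v" using fsc[of "-1" v] by simp
    moreover have "f (- v) \<le> norm v" using fp[of "-v"] pnorm[of "-v"] by simp
    ultimately show ?thesis by linarith
  qed
  have bl: "bounded_linear f"
    by (rule bounded_linear_intro[where K=1]) (use fadd fsc fb in auto)
  have "f a \<le> f x - d" if "a \<in> A" for a
  proof -
    have "p (- (x - a)) \<le> norm (- (x - a) + 1 *\<^sub>R (x - a)) - 1 * d"
      by (rule plow[OF Ein]) (use that in auto)
    then have "f (- (x - a)) \<le> - d" using fp[of "- (x - a)"] by simp
    moreover have "f (- (x - a)) = f a - f x" using fsc[of "-1" "x - a"] fadd[of x "- a"] fsc[of "-1" a] by simp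
    ultimately show ?thesis by simp
  qed
  then show ?thesis using bl fb dpos by blast
qed



lemma cc_pairwise:
  fixes S :: "'a::real_normed_vector set"
  assumes "\<forall>x\<in>S. \<forall>y\<in>S. norm (x - y) \<le> e"
  shows "\<forall>x\<in>closure (convex hull S). \<forall>y\<in>closure (convex hull S). norm (x - y) \<le> e"
proof -
  have 1: "closure (convex hull S) \<subseteq> cball x e" if "x \<in> S" for x
  proof -
    have "S \<subseteq> cball x e" using assms that by (auto simp: dist_norm)
    then have "convex hull S \<subseteq> cball x e" by (rule hull_minimal) auto
    then show ?thesis by (rule closure_minimal) auto
  qed
  have 2: "closure (convex hull S) \<subseteq> cball y e" if "y \<in> closure (convex hull S)" for y
  proof -
    have "S \<subseteq> cball y e"
    proof
      fix x assume x: "x \<in> S"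
      have "y \<in> cball x e" using 1[OF x] that by blast
      then show "x \<in> cball y e" by (simp add: dist_commute)
    qed
    then have "convex hull S \<subseteq> cball y e" by (rule hull_minimal) auto
    then show ?thesis by (rule closure_minimal) auto
  qed
  show ?thesis
  proof (intro ballI)
    fix x y assume x: "x \<in> closure (convex hull S)" and y: "y \<in> closure (convex hull S)"
    have "y \<in> cball x e" using 2[OF x] y by blast
    then show "norm (x - y) \<le> e" by (simp add: dist_norm)
  qed
qed

lemma hull_cc:
  fixes X Y :: "'a::real_normed_vector set"
  shows "closure (convex hull (closure (convex hull X) \<union> Y)) = closure (convex hull (X \<union> Y))"
proof (rule antisym)
  let ?Z = "closure (convex hull (X \<union> Y))"
  have cZ: "closed ?Z" by simp
  have vZ: "convex ?Z" by (simp add: convex_closure)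
  have XY: "X \<union> Y \<subseteq> ?Z" by (rule subset_trans[OF hull_subset closure_subset])
  have "convex hull X \<subseteq> convex hull (X \<union> Y)" by (rule hull_mono) simp
  then have "closure (convex hull X) \<subseteq> ?Z" by (rule closure_mono)
  moreover have "Y \<subseteq> ?Z" using XY by simp
  ultimately have "closure (convex hull X) \<union> Y \<subseteq> ?Z" by simp
  then have "convex hull (closure (convex hull X) \<union> Y) \<subseteq> ?Z"
    using vZ by (rule hull_minimal)
  then show "closure (convex hull (closure (convex hull X) \<union> Y)) \<subseteq> ?Z"
    using cZ by (rule closure_minimal)
next
  have "X \<subseteq> closure (convex hull X)" by (rule subset_trans[OF hull_subset closure_subset])
  then have "X \<union> Y \<subseteq> closure (convex hull X) \<union> Y" by blast
  then have "convex hull (X \<union> Y) \<subseteq> convex hull (closure (convex hull X) \<union> Y)" by (rule hull_mono)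
  then show "closure (convex hull (X \<union> Y)) \<subseteq> closure (convex hull (closure (convex hull X) \<union> Y))"
    by (rule closure_mono)
qed

lemma superlemma:
  fixes A K C :: "'a::real_normed_vector set"
  assumes bC: "bounded C" and nd: "non_eps_dentable \<epsilon> C" and clA: "closed A" and cvA: "convex A"
    and Kpw: "\<forall>x\<in>K. \<forall>y\<in>K. norm (x - y) \<le> e" and eeps: "e < \<epsilon>"
    and Ceq: "C = closure (convex hull (A \<union> K))"
  shows "C = A"
proof (rule ccontr)
  assume CA: "C \<noteq> A"
  define K' where "K' = convex hull K"
  have cvK': "convex K'" by (simp add: K'_def)
  have Cpw: "\<forall>x\<in>closure (convex hull K). \<forall>y\<in>closure (convex hull K). norm (x - y) \<le> e"
    by (rule cc_pairwise[OF Kpw])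
  have K'pw: "norm (x - y) \<le> e" if "x \<in> K'" "y \<in> K'" for x y
    using Cpw that closure_subset unfolding K'_def by blast
  have AKC: "A \<union> K \<subseteq> C" unfolding Ceq by (rule subset_trans[OF hull_subset closure_subset])
  have AC: "A \<subseteq> C" using AKC by auto
  have KC: "K \<subseteq> C" using AKC by auto
  have cvC: "convex C" using Ceq by (simp add: convex_closure)
  have K'C: "K' \<subseteq> C" unfolding K'_def using KC cvC by (rule hull_minimal)
  have ndD: "\<And>g \<delta>. g \<in> dual_unit_ball \<Longrightarrow> \<delta> > 0 \<Longrightarrow> \<epsilon> < diameter (slice g C \<delta>)"
    using nd unfolding non_eps_dentable_def by blast
  have zero_in: "(\<lambda>x. 0::real) \<in> dual_unit_ball" by (simp add: dual_unit_ball_def onorm_zero)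
  have Kne: "K \<noteq> {}"
  proof
    assume "K = {}"
    then have "C = A" using Ceq cvA clA by (simp add: hull_same closure_closed)
    with CA show False by simp
  qed
  have Ane: "A \<noteq> {}"
  proof
    assume A0: "A = {}"
    have Cne: "C \<noteq> {}" using nd by (simp add: non_eps_dentable_def)
    have "slice (\<lambda>x. 0) C 1 = C" using Cne by (auto simp: slice_def)
    moreover have "diameter C \<le> e"
      by (rule diameter_le) (use Cne Cpw Ceq A0 in auto)
    moreover have "diameter (slice (\<lambda>x. 0) C 1) > \<epsilon>" by (rule ndD[OF zero_in]) simp
    ultimately show False using eeps by simp
  qed
  obtain x where xC: "x \<in> C" and xA: "x \<notin> A" using CA AC by blast
  obtain f d where bl: "bounded_linear f" and fb: "\<And>v. \<bar>f v\<bar> \<le> norm v" and dpos: "d > 0"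
    and fA: "\<And>a. a \<in> A \<Longrightarrow> f a \<le> f x - d"
    using separation[OF clA cvA Ane xA] by blast
  interpret f: bounded_linear f by (rule bl)
  have fdual: "f \<in> dual_unit_ball"
    unfolding dual_unit_ball_def using bl fb by (auto intro: onorm_bound)
  obtain M where Mpos: "M > 0" and M: "\<And>c. c \<in> C \<Longrightarrow> norm c \<le> M" using bC bounded_pos by metis
  define s where "s = Sup (f ` C)"
  have bdd: "bdd_above (f ` C)"
    by (rule bdd_aboveI2[where M=M]) (use fb M in \<open>smt (verit)\<close>)
  have fs: "f c \<le> s" if "c \<in> C" for c unfolding s_def by (rule cSup_upper) (use that bdd in auto)
  define r where "r = min 1 ((\<epsilon> - e) / (4 * M))"
  have rpos: "r > 0" using eeps Mpos by (simp add: r_def)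
  have "r \<le> (\<epsilon> - e) / (4 * M)" by (simp add: r_def)
  then have "r * (4 * M) \<le> \<epsilon> - e" using Mpos by (simp add: pos_le_divide_eq)
  then have r4: "4 * M * r \<le> \<epsilon> - e" by (simp add: ac_simps)
  define \<delta> where "\<delta> = r * d"
  have \<delta>pos: "\<delta> > 0" using rpos dpos by (simp add: \<delta>_def)
  define T where "T = {y. \<exists>k\<in>K'. norm (y - k) * d \<le> 2 * M * (s - f y)}"
  have cvT: "convex T"
    unfolding convex_def
  proof (intro ballI allI impI)
    fix y1 y2 and u v :: real
    assume y1: "y1 \<in> T" and y2: "y2 \<in> T" and uv: "0 \<le> u" "0 \<le> v" "u + v = 1"
    obtain k1 where k1: "k1 \<in> K'" "norm (y1 - k1) * d \<le> 2 * M * (s - f y1)" using y1 by (auto simp: T_def)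
    obtain k2 where k2: "k2 \<in> K'" "norm (y2 - k2) * d \<le> 2 * M * (s - f y2)" using y2 by (auto simp: T_def)
    have kK: "u *\<^sub>R k1 + v *\<^sub>R k2 \<in> K'" using convexD[OF cvK' k1(1) k2(1) uv] .
    have "norm ((u *\<^sub>R y1 + v *\<^sub>R y2) - (u *\<^sub>R k1 + v *\<^sub>R k2)) = norm (u *\<^sub>R (y1 - k1) + v *\<^sub>R (y2 - k2))"
      by (simp add: algebra_simps)
    also have "\<dots> \<le> u * norm (y1 - k1) + v * norm (y2 - k2)"
      using norm_triangle_ineq[of "u *\<^sub>R (y1 - k1)" "v *\<^sub>R (y2 - k2)"] uv by simp
    finally have n0: "norm ((u *\<^sub>R y1 + v *\<^sub>R y2) - (u *\<^sub>R k1 + v *\<^sub>R k2)) * d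
        \<le> (u * norm (y1 - k1) + v * norm (y2 - k2)) * d"
      using dpos by (intro mult_right_mono) auto
    also have "\<dots> = u * (norm (y1 - k1) * d) + v * (norm (y2 - k2) * d)" by (simp add: algebra_simps)
    finally have n: "norm ((u *\<^sub>R y1 + v *\<^sub>R y2) - (u *\<^sub>R k1 + v *\<^sub>R k2)) * d
        \<le> u * (norm (y1 - k1) * d) + v * (norm (y2 - k2) * d)" .
    also have "\<dots> \<le> u * (2 * M * (s - f y1)) + v * (2 * M * (s - f y2))"
      using k1 k2 uv by (intro add_mono mult_left_mono) auto
    also have "\<dots> = 2 * M * ((u + v) * s - (u * f y1 + v * f y2))" by (simp add: algebra_simps)
    also have "\<dots> = 2 * M * (s - f (u *\<^sub>R y1 + v *\<^sub>R y2))"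
      using uv(3) by (simp add: f.add f.scaleR)
    finally show "u *\<^sub>R y1 + v *\<^sub>R y2 \<in> T" using kK by (auto simp: T_def)
  qed
  obtain k0 where k0: "k0 \<in> K" using Kne by auto
  have AT: "A \<subseteq> T"
  proof
    fix a assume a: "a \<in> A"
    have k0K': "k0 \<in> K'" unfolding K'_def by (rule hull_inc[OF k0])
    have "norm (a - k0) \<le> norm a + norm k0" by (rule norm_triangle_ineq4)
    also have "\<dots> \<le> 2 * M" using M[of a] M[of k0] subsetD[OF AC a] subsetD[OF KC k0] by linarith
    finally have "norm (a - k0) * d \<le> 2 * M * d" using dpos by simp
    also have "\<dots> \<le> 2 * M * (s - f a)" using fA[OF a] fs[OF xC] Mpos by simp
    finally show "a \<in> T" using k0K' by (auto simp: T_def)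
  qed
  have KT: "K \<subseteq> T"
  proof
    fix k assume k: "k \<in> K"
    have "k \<in> K'" unfolding K'_def by (rule hull_inc[OF k])
    moreover have "0 \<le> 2 * M * (s - f k)" using fs[of k] k KC Mpos by auto
    ultimately show "k \<in> T" by (force simp: T_def)
  qed
  have hT: "convex hull (A \<union> K) \<subseteq> T" using AT KT cvT by (intro hull_minimal[of "A \<union> K" T convex]) auto
  have key: "\<exists>k\<in>K'. norm (w - k) \<le> \<eta> + 2 * M * r" if w: "w \<in> slice f C \<delta>" and eta: "\<eta> > 0" for w \<eta>
  proof -
    have wC: "w \<in> C" and fw: "f w > s - \<delta>" using w by (auto simp: slice_def s_def)
    define \<eta>' where "\<eta>' = min \<eta> (f w - (s - \<delta>))"
    have \<eta>'pos: "\<eta>' > 0" using eta fw by (simp add: \<eta>'_def)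
    have "w \<in> closure (convex hull (A \<union> K))" using wC Ceq by simp
    then obtain y where y: "y \<in> convex hull (A \<union> K)" and dy: "dist y w < \<eta>'"
      using \<eta>'pos unfolding closure_approachable by blast
    have "\<bar>f y - f w\<bar> \<le> norm (y - w)" using fb[of "y - w"] by (simp add: f.diff)
    moreover have "norm (y - w) < f w - (s - \<delta>)" using dy by (simp add: \<eta>'_def dist_norm)
    ultimately have fy: "f y > s - \<delta>" by linarith
    obtain k where k: "k \<in> K'" "norm (y - k) * d \<le> 2 * M * (s - f y)" using hT y by (auto simp: T_def)
    have "s - f y < r * d" using fy unfolding \<delta>_def by simp
    then have "2 * M * (s - f y) < 2 * M * (r * d)" using Mpos by (intro mult_strict_left_mono) auto
    then have "norm (y - k) * d < 2 * M * r * d" using k(2) by (simp add: ac_simps)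
    then have yk: "norm (y - k) < 2 * M * r" using dpos by simp
    have "norm (w - y) \<le> \<eta>" using dy by (simp add: \<eta>'_def dist_norm norm_minus_commute)
    then have "norm (w - k) \<le> \<eta> + 2 * M * r" using yk by (intro norm_diff_triangle_le) auto
    then show ?thesis using k(1) by blast
  qed
  have "diameter (slice f C \<delta>) \<le> \<epsilon>"
  proof (rule diameter_le)
    have "k0 \<in> K'" unfolding K'_def by (rule hull_inc[OF k0])
    then have "0 \<le> e" using K'pw[of k0 k0] by simp
    then show "slice f C \<delta> \<noteq> {} \<or> 0 \<le> \<epsilon>" using eeps by simp
    fix u v assume u: "u \<in> slice f C \<delta>" and v: "v \<in> slice f C \<delta>"
    have "norm (u - v) \<le> (4 * M * r + e) + \<eta>" if eta: "\<eta> > 0" for \<eta>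
    proof -
      obtain k1 where k1: "k1 \<in> K'" "norm (u - k1) \<le> \<eta>/2 + 2 * M * r" using key[OF u, of "\<eta>/2"] eta by auto
      obtain k2 where k2: "k2 \<in> K'" "norm (v - k2) \<le> \<eta>/2 + 2 * M * r" using key[OF v, of "\<eta>/2"] eta by auto
      have "norm (k2 - v) \<le> \<eta>/2 + 2 * M * r" using k2(2) by (simp add: norm_minus_commute)
      then have "norm (k1 - v) \<le> e + (\<eta>/2 + 2 * M * r)" by (rule norm_diff_triangle_le[OF K'pw[OF k1(1) k2(1)]])
      then have "norm (u - v) \<le> (\<eta>/2 + 2 * M * r) + (e + (\<eta>/2 + 2 * M * r))" by (rule norm_diff_triangle_le[OF k1(2)])
      then show ?thesis by simp
    qed
    then have "norm (u - v) \<le> 4 * M * r + e" by (rule field_le_epsilon)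
    then show "norm (u - v) \<le> \<epsilon>" using r4 by simp
  qed
  moreover have "diameter (slice f C \<delta>) > \<epsilon>" by (rule ndD[OF fdual \<delta>pos])
  ultimately show False by simp
qed


lemma induct_lemma:
  fixes C :: "'a::real_normed_vector set"
  assumes bC: "bounded C" and nd: "non_eps_dentable \<epsilon> C" and eeps: "e < \<epsilon>"
    and fin: "finite G" and Gpw: "\<forall>K\<in>G. \<forall>x\<in>K. \<forall>y\<in>K. norm (x - y) \<le> e"
  shows "closed A \<Longrightarrow> convex A \<Longrightarrow> C = closure (convex hull (A \<union> \<Union>G)) \<Longrightarrow> C = A"
  using fin Gpw
proof (induction G arbitrary: A rule: finite_induct)
  case empty
  then show ?case by (simp add: hull_same closure_closed)
next
  case (insert K G)
  define A' where "A' = closure (convex hull (A \<union> K))"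
  have "closed A'" "convex A'" by (simp_all add: A'_def convex_closure)
  moreover have "C = closure (convex hull (A' \<union> \<Union>G))"
    unfolding A'_def hull_cc using insert.prems by (simp add: Un_assoc)
  moreover have "\<forall>K\<in>G. \<forall>x\<in>K. \<forall>y\<in>K. norm (x - y) \<le> e" using insert.prems by simp
  ultimately have "C = A'" using insert.IH by blast
  then show ?case
    using superlemma[OF bC nd insert.prems(1) insert.prems(2) _ eeps] insert.prems(4) A'_def by simp
qed

theorem mainTheorem2:
  fixes C C' D :: "'a::banach set" and \<epsilon> :: real
  assumes "\<epsilon> > 0"
    and "closed C" "bounded C" "convex C" "non_eps_dentable \<epsilon> C"
    and "C' \<subseteq> C" "closed C'" "convex C'"
    and "D \<subseteq> C" "kuratowski_mnc D < ereal \<epsilon>"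
    and "C = closed_convex_hull (C' \<union> D)"
  shows "C = C'"
proof -
  obtain z where z: "z \<in> {ereal e | e. e > 0 \<and>
     (\<exists>F. finite F \<and> D \<subseteq> \<Union>F \<and> (\<forall>S\<in>F. bounded S \<and> diameter S \<le> e))}" and zl: "z < ereal \<epsilon>"
    using assms(10) unfolding kuratowski_mnc_def Inf_less_iff by blast
  then obtain e F where e: "z = ereal e" "e > 0" and F: "finite F" "D \<subseteq> \<Union>F"
    and FS: "\<And>S. S \<in> F \<Longrightarrow> bounded S \<and> diameter S \<le> e" by blast
  have eeps: "e < \<epsilon>" using zl e by simp
  define G where "G = (\<lambda>S. S \<inter> D) ` F"
  have finG: "finite G" using F by (simp add: G_def)
  have UG: "\<Union>G = D" using F by (auto simp: G_def)
  have Gpw: "\<forall>K\<in>G. \<forall>x\<in>K. \<forall>y\<in>K. norm (x - y) \<le> e"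
  proof (intro ballI)
    fix K x y assume K: "K \<in> G" and x: "x \<in> K" and y: "y \<in> K"
    obtain S where S: "S \<in> F" "K = S \<inter> D" using K by (auto simp: G_def)
    have "dist x y \<le> diameter S" using FS[OF S(1)] x y S(2) by (intro diameter_bounded_bound) auto
    then show "norm (x - y) \<le> e" using FS[OF S(1)] by (simp add: dist_norm)
  qed
  have "C = closure (convex hull (C' \<union> \<Union>G))" using assms(11) UG by (simp add: closed_convex_hull_def)
  then show ?thesis
    using induct_lemma[OF assms(3) assms(5) eeps finG Gpw, of C'] assms(7,8) by blast
qed


end
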